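(* Let $\alpha=(\alpha_1,\ldots,\alpha_n)$ be a composition, and suppose there is $1\le r\le n-1$ with $\alpha_r<\alpha_{r+1}$. Let $w\in S_n$ be a permutation in which the value $r$ appears before the value $r+1$. Let $\alpha'=\alpha\cdot s_r$ (i.e. $\alpha$ with $\alpha_r$ and $\alpha_{r+1}$ interchanged). Then $x_\alpha(w)=x_{\alpha'}(w)$.
   Context: A composition is a sequence of $n$ nonnegative integers. The skyline diagram $D(\gamma)$ of a composition $\gamma$ is the set of boxes $(i,j)$ (row $i$, column $j$, rows numbered top to bottom) with $1\le j\le\gamma_i$. For $w=w_1\cdots w_n\in S_n$, the filling $\mathcal{F}_w(D(\gamma))$ is defined column by column: for each column $j$, for $k=1,\ldots,n$ in turn, place $w_k$ into the topmost still-empty box of column $j$ of $D(\gamma)$ whose row index is $\ge w_k$, skipping $w_k$ if no such box exists. Then $x_\gamma(w)=(x_1,\ldots,x_n)$, where $x_k$ is the number of appearances of $k$ in $\mathcal{F}_w(D(\gamma))$. *)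

theory Defs
  imports Main
begin

text \<open>Compositions are lists of naturals; entry i (1-indexed) is \<open>\<gamma> ! (i-1)\<close>.
Rows and values are 1-indexed.\<close>

definition is_perm :: "nat \<Rightarrow> nat list \<Rightarrow> bool" where
  "is_perm n w \<longleftrightarrow> length w = n \<and> distinct w \<and> set w = {1..n}"

definition col_rows :: "nat list \<Rightarrow> nat \<Rightarrow> nat set" where
  "col_rows \<gamma> j = {i. 1 \<le> i \<and> i \<le> length \<gamma> \<and> j \<le> \<gamma> ! (i - 1)}"

text \<open>Fill one column: A is the set of still-empty rows of that column; each value v is put into
the topmost (smallest index) empty row i with i \<ge> v, or skipped if none exists.\<close>
fun fill_col :: "nat set \<Rightarrow> nat list \<Rightarrow> (nat \<times> nat) list" where
  "fill_col A [] = []"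
| "fill_col A (v # vs) =
     (if \<exists>i\<in>A. v \<le> i
      then (let m = Min {i\<in>A. v \<le> i} in (m, v) # fill_col (A - {m}) vs)
      else fill_col A vs)"

text \<open>The filling F_w(D(gamma)): box (i,j) (row i, column j) maps to its entry, if any.\<close>
definition filling :: "nat list \<Rightarrow> nat list \<Rightarrow> nat \<times> nat \<Rightarrow> nat option" where
  "filling w \<gamma> ij = (if 1 \<le> snd ij then map_of (fill_col (col_rows \<gamma> (snd ij)) w) (fst ij) else None)"

definition x_vec :: "nat list \<Rightarrow> nat list \<Rightarrow> nat list" where
  "x_vec \<gamma> w = map (\<lambda>k. card {ij. filling w \<gamma> ij = Some k}) [1..<length \<gamma> + 1]"

end

theory Submission
  imports Defs
begin

lemma fill_col_fst:
  "finite A \<Longrightarrow> set (map fst (fill_col A vs)) \<subseteq> A \<and> distinct (map fst (fill_col A vs))"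
proof (induction vs arbitrary: A)
  case Nil
  then show ?case by simp
next
  case (Cons v vs)
  show ?case
  proof (cases "\<exists>i\<in>A. v \<le> i")
    case True
    define m where "m = Min {i\<in>A. v \<le> i}"
    have "m \<in> {i\<in>A. v \<le> i}" unfolding m_def using True Cons.prems by (intro Min_in) auto
    then have mA: "m \<in> A" by simp
    have IH: "set (map fst (fill_col (A - {m}) vs)) \<subseteq> A - {m} \<and> distinct (map fst (fill_col (A - {m}) vs))"
      using Cons by simp
    have eq: "fill_col A (v # vs) = (m, v) # fill_col (A - {m}) vs"
      using True by (simp add: Let_def m_def)
    have "m \<notin> set (map fst (fill_col (A - {m}) vs))" using IH by blast
    then show ?thesis unfolding eq using IH mA by auto
  next
    case False
    then show ?thesis using Cons by simp
  qed
qed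

lemma fill_col_snd: "set (map snd (fill_col A vs)) \<subseteq> set vs"
  by (induction vs arbitrary: A) (auto simp: Let_def)

lemma fill_col_snd_distinct: "distinct vs \<Longrightarrow> distinct (map snd (fill_col A vs))"
proof (induction vs arbitrary: A)
  case Nil
  then show ?case by simp
next
  case (Cons v vs)
  have nv: "v \<notin> set (map snd (fill_col B vs))" for B using fill_col_snd[of B vs] Cons.prems by auto
  show ?case
  proof (cases "\<exists>i\<in>A. v \<le> i")
    case True
    then show ?thesis using Cons nv[of "A - {Min {i\<in>A. v \<le> i}}"] by (simp add: Let_def)
  next
    case False
    then show ?thesis using Cons by simp
  qed
qed

lemma key:
  assumes "finite B" "r \<notin> B" "Suc r \<notin> B" "Suc r \<notin> set p"
  shows "map snd (fill_col (insert (Suc r) B) (p @ r # q)) = map snd (fill_col (insert r B) (p @ r # q))"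
  using assms
proof (induction p arbitrary: B)
  case Nil
  have m1: "Min {i\<in>insert r B. r \<le> i} = r" using Nil by (intro Min_eqI) auto
  have m2: "Min {i\<in>insert (Suc r) B. r \<le> i} = Suc r" using Nil
    by (intro Min_eqI) (auto simp: Suc_le_eq order_le_less)
  have e1: "insert r B - {r} = B" using Nil by auto
  have e2: "insert (Suc r) B - {Suc r} = B" using Nil by auto
  show ?case using m1 m2 e1 e2 by (simp add: Let_def)
next
  case (Cons v p)
  have vne: "v \<noteq> Suc r" using Cons.prems by simp
  have pn: "Suc r \<notin> set p" using Cons.prems by simp
  show ?case
  proof (cases "v \<le> r")
    case True
    show ?thesis
    proof (cases "\<exists>i\<in>B. v \<le> i \<and> i < r")
      case True
      define m where "m = Min {i\<in>B. v \<le> i}"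
      have fin: "finite {i\<in>B. v \<le> i}" using Cons.prems by simp
      have mIn: "m \<in> {i\<in>B. v \<le> i}" unfolding m_def using True fin by (intro Min_in) auto
      then have mB: "m \<in> B" and vm: "v \<le> m" by auto
      have mle: "m \<le> y" if "y \<in> B" "v \<le> y" for y unfolding m_def using fin that by (intro Min_le) auto
      have mr: "m < r" using True mle by force
      have mm: "Min {i\<in>insert x B. v \<le> i} = m" if "x \<ge> r" for x
      proof (rule Min_eqI)
        show "finite {i\<in>insert x B. v \<le> i}" using Cons.prems(1) by simp
        show "m \<in> {i\<in>insert x B. v \<le> i}" using mB vm by simp
        fix y assume "y \<in> {i\<in>insert x B. v \<le> i}"
        then show "m \<le> y" using mle mr that by auto
      qed
      have ins: "insert x B - {m} = insert x (B - {m})" if "x \<ge> r" for x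
        using mr that by auto
      have ex: "\<exists>i\<in>insert x B. v \<le> i" for x using mB vm by auto
      have IH: "map snd (fill_col (insert (Suc r) (B - {m})) (p @ r # q)) =
                map snd (fill_col (insert r (B - {m})) (p @ r # q))"
        using Cons.IH[of "B - {m}"] Cons.prems pn by simp
      show ?thesis using mm[of r] mm[of "Suc r"] ins[of r] ins[of "Suc r"] ex[of r] ex[of "Suc r"] IH
        by (simp add: Let_def)
    next
      case False
      have big: "Suc r < y" if "y \<in> B" "v \<le> y" for y
      proof -
        have "\<not> y < r" using False that by auto
        moreover have "y \<noteq> r" "y \<noteq> Suc r" using that Cons.prems by auto
        ultimately show ?thesis by simp
      qed
      have m1: "Min {i\<in>insert r B. v \<le> i} = r"
      proof (rule Min_eqI)
        show "finite {i\<in>insert r B. v \<le> i}" using Cons.prems by simp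
        show "r \<in> {i\<in>insert r B. v \<le> i}" using \<open>v \<le> r\<close> by simp
        fix y assume "y \<in> {i\<in>insert r B. v \<le> i}"
        then show "r \<le> y" using big by force
      qed
      have m2: "Min {i\<in>insert (Suc r) B. v \<le> i} = Suc r"
      proof (rule Min_eqI)
        show "finite {i\<in>insert (Suc r) B. v \<le> i}" using Cons.prems by simp
        show "Suc r \<in> {i\<in>insert (Suc r) B. v \<le> i}" using \<open>v \<le> r\<close> by simp
        fix y assume "y \<in> {i\<in>insert (Suc r) B. v \<le> i}"
        then show "Suc r \<le> y" using big by force
      qed
      have e1: "insert r B - {r} = B" using Cons.prems by auto
      have e2: "insert (Suc r) B - {Suc r} = B" using Cons.prems by auto
      show ?thesis using m1 m2 e1 e2 \<open>v \<le> r\<close> by (simp add: Let_def)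
    qed
  next
    case False
    then have vg: "Suc (Suc r) \<le> v" using vne by simp
    have S: "{i\<in>insert x B. v \<le> i} = {i\<in>B. v \<le> i}" if "x \<le> Suc r" for x
      using vg that by auto
    have E: "(\<exists>i\<in>insert x B. v \<le> i) = (\<exists>i\<in>B. v \<le> i)" if "x \<le> Suc r" for x
      using vg that by auto
    show ?thesis
    proof (cases "\<exists>i\<in>B. v \<le> i")
      case True
      define m where "m = Min {i\<in>B. v \<le> i}"
      have fin: "finite {i\<in>B. v \<le> i}" using Cons.prems by simp
      have mIn: "m \<in> {i\<in>B. v \<le> i}" unfolding m_def using True fin by (intro Min_in) auto
      then have mB: "m \<in> B" and vm: "v \<le> m" by auto
      have mle: "m \<le> y" if "y \<in> B" "v \<le> y" for y unfolding m_def using fin that by (intro Min_le) auto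
      have ins: "insert x B - {m} = insert x (B - {m})" if "x \<le> Suc r" for x
        using vm vg that by auto
      have IH: "map snd (fill_col (insert (Suc r) (B - {m})) (p @ r # q)) =
                map snd (fill_col (insert r (B - {m})) (p @ r # q))"
        using Cons.IH[of "B - {m}"] Cons.prems pn by simp
      show ?thesis using S[of r] S[of "Suc r"] E[of r] E[of "Suc r"] ins[of r] ins[of "Suc r"] True IH
        by (simp add: Let_def m_def)
    next
      case False
      have IH: "map snd (fill_col (insert (Suc r) B) (p @ r # q)) =
                map snd (fill_col (insert r B) (p @ r # q))"
        using Cons.IH[of B] Cons.prems pn by simp
      show ?thesis using E[of r] E[of "Suc r"] False IH by simp
    qed
  qed
qed

lemma filling_Some:
  "filling w \<gamma> (i, j) = Some k \<longleftrightarrow> 1 \<le> j \<and> map_of (fill_col (col_rows \<gamma> j) w) i = Some k"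
  by (simp add: filling_def)

lemma card_filling:
  assumes "distinct w"
  shows "card {ij. filling w \<gamma> ij = Some k} =
         card {j. 1 \<le> j \<and> k \<in> set (map snd (fill_col (col_rows \<gamma> j) w))}"
proof -
  have fin: "finite (col_rows \<gamma> j)" for j
    by (rule finite_subset[of _ "{1..length \<gamma>}"]) (auto simp: col_rows_def)
  have dfst: "distinct (map fst (fill_col (col_rows \<gamma> j) w))" for j
    using fill_col_fst[OF fin] by blast
  have injs: "inj_on snd (set (fill_col (col_rows \<gamma> j) w))" for j
    using fill_col_snd_distinct[OF assms] distinct_map by blast
  have mem: "filling w \<gamma> (i, j) = Some k \<longleftrightarrow> 1 \<le> j \<and> (i, k) \<in> set (fill_col (col_rows \<gamma> j) w)" for i j
    unfolding filling_Some using dfst[of j] map_of_is_SomeI[of _ i k] map_of_SomeD[of _ i k] by blast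
  have "bij_betw snd {ij. filling w \<gamma> ij = Some k}
         {j. 1 \<le> j \<and> k \<in> set (map snd (fill_col (col_rows \<gamma> j) w))}"
  proof (rule bij_betw_imageI)
    show "inj_on snd {ij. filling w \<gamma> ij = Some k}"
    proof (rule inj_onI)
      fix x y assume x: "x \<in> {ij. filling w \<gamma> ij = Some k}" and y: "y \<in> {ij. filling w \<gamma> ij = Some k}"
        and e: "snd x = snd y"
      obtain i j where xi: "x = (i, j)" by (cases x)
      obtain i' j' where yi: "y = (i', j')" by (cases y)
      have jj: "j' = j" using e xi yi by simp
      have h1: "(i, k) \<in> set (fill_col (col_rows \<gamma> j) w)" using x xi mem by simp
      have h2: "(i', k) \<in> set (fill_col (col_rows \<gamma> j) w)" using y yi jj mem by simp
      have "(i, k) = (i', k)" using inj_onD[OF injs[of j] _ h1 h2] by simp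
      then show "x = y" using xi yi jj by simp
    qed
    show "snd ` {ij. filling w \<gamma> ij = Some k} =
         {j. 1 \<le> j \<and> k \<in> set (map snd (fill_col (col_rows \<gamma> j) w))}"
    proof (rule set_eqI, rule iffI)
      fix j assume "j \<in> snd ` {ij. filling w \<gamma> ij = Some k}"
      then obtain i where "filling w \<gamma> (i, j) = Some k" by force
      then have "1 \<le> j" "(i, k) \<in> set (fill_col (col_rows \<gamma> j) w)" using mem by blast+
      then show "j \<in> {j. 1 \<le> j \<and> k \<in> set (map snd (fill_col (col_rows \<gamma> j) w))}"
        by (simp add: rev_image_eqI)
    next
      fix j assume "j \<in> {j. 1 \<le> j \<and> k \<in> set (map snd (fill_col (col_rows \<gamma> j) w))}"
      then obtain i where j1: "1 \<le> j" and "(i, k) \<in> set (fill_col (col_rows \<gamma> j) w)" by auto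
      then have "filling w \<gamma> (i, j) = Some k" using mem by blast
      then have "(i, j) \<in> {ij. filling w \<gamma> ij = Some k}" by simp
      then show "j \<in> snd ` {ij. filling w \<gamma> ij = Some k}" by (rule rev_image_eqI) simp
    qed
  qed
  then show ?thesis by (rule bij_betw_same_card)
qed

theorem proposition4p5:
  fixes \<alpha> w :: "nat list" and n r :: nat
  assumes "length \<alpha> = n"
    and "1 \<le> r" and "r \<le> n - 1"
    and "\<alpha> ! (r - 1) < \<alpha> ! r"
    and "is_perm n w"
    and "\<exists>a b. a < b \<and> b < n \<and> w ! a = r \<and> w ! b = r + 1"
  shows "x_vec \<alpha> w = x_vec (\<alpha>[r - 1 := \<alpha> ! r, r := \<alpha> ! (r - 1)]) w"
proof -
  define \<beta> where "\<beta> = \<alpha>[r - 1 := \<alpha> ! r, r := \<alpha> ! (r - 1)]"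
  have dw: "distinct w" and lw: "length w = n" using assms(5) by (auto simp: is_perm_def)
  have rn: "r < n" "r - 1 < n" using assms(2,3) by auto
  obtain a b where ab: "a < b" "b < n" "w ! a = r" "w ! b = r + 1" using assms(6) by blast
  define p where "p = take a w"
  define q where "q = drop (Suc a) w"
  have wsplit: "w = p @ r # q" unfolding p_def q_def using ab lw
    by (metis Cons_nth_drop_Suc append_take_drop_id order.strict_trans)
  have pn: "Suc r \<notin> set p"
  proof
    assume "Suc r \<in> set p"
    then obtain c where c: "c < length p" "p ! c = Suc r" by (auto simp: in_set_conv_nth)
    have "c < a" "w ! c = Suc r" using c p_def by auto
    have cl: "c < length w" "b < length w" using \<open>c < a\<close> ab lw by auto
    have "w ! c = w ! b" using \<open>w ! c = Suc r\<close> ab by simp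
    then have "c = b" using nth_eq_iff_index_eq[OF dw cl] by simp
    then show False using \<open>c < a\<close> ab by simp
  qed
  have lb: "length \<beta> = length \<alpha>" by (simp add: \<beta>_def)
  have bnth: "\<beta> ! (i - 1) = (if i = r then \<alpha> ! r else if i = Suc r then \<alpha> ! (r - 1) else \<alpha> ! (i - 1))"
    if "1 \<le> i" "i \<le> n" for i
    using that rn assms(1,2) by (auto simp: \<beta>_def nth_list_update)
  have memb: "i \<in> col_rows \<beta> j \<longleftrightarrow> 1 \<le> i \<and> i \<le> n \<and>
      j \<le> (if i = r then \<alpha> ! r else if i = Suc r then \<alpha> ! (r - 1) else \<alpha> ! (i - 1))" for i j
    using bnth[of i] lb assms(1) by (auto simp: col_rows_def)
  have mema: "i \<in> col_rows \<alpha> j \<longleftrightarrow> 1 \<le> i \<and> i \<le> n \<and> j \<le> \<alpha> ! (i - 1)" for i j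
    using assms(1) by (auto simp: col_rows_def)
  have ar: "\<alpha> ! (Suc r - 1) = \<alpha> ! r" by simp
  have rn2: "Suc r \<le> n" using rn by simp
  have col: "map snd (fill_col (col_rows \<alpha> j) w) = map snd (fill_col (col_rows \<beta> j) w)" for j
  proof (cases "\<alpha> ! (r - 1) < j \<and> j \<le> \<alpha> ! r")
    case True
    define B where "B = col_rows \<alpha> j - {r, Suc r}"
    have finB: "finite B" unfolding B_def
      by (rule finite_subset[of _ "{1..length \<alpha>}"]) (auto simp: col_rows_def)
    have A1: "col_rows \<alpha> j = insert (Suc r) B"
    proof (rule set_eqI)
      fix i show "i \<in> col_rows \<alpha> j \<longleftrightarrow> i \<in> insert (Suc r) B"
        using True rn2 assms(2) unfolding B_def by (cases "i = r"; cases "i = Suc r") (auto simp: mema)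
    qed
    have A2: "col_rows \<beta> j = insert r B"
    proof (rule set_eqI)
      fix i show "i \<in> col_rows \<beta> j \<longleftrightarrow> i \<in> insert r B"
        using True rn2 assms(2) unfolding B_def memb by (cases "i = r"; cases "i = Suc r") (auto simp: mema)
    qed
    show ?thesis unfolding A1 A2 wsplit
      by (rule key) (use finB pn in \<open>auto simp: B_def\<close>)
  next
    case False
    have eq: "j \<le> \<alpha> ! (r - 1) \<longleftrightarrow> j \<le> \<alpha> ! r" using False assms(4) by auto
    have "col_rows \<alpha> j = col_rows \<beta> j"
    proof (rule set_eqI)
      fix i show "i \<in> col_rows \<alpha> j \<longleftrightarrow> i \<in> col_rows \<beta> j"
        using eq unfolding mema memb by auto
    qed
    then show ?thesis by simp
  qed
  show ?thesis unfolding \<beta>_def[symmetric] x_vec_def lb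
    by (rule map_cong[OF refl]) (simp only: card_filling[OF dw] col)
qed

end
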